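(* If $\mathfrak{q}$ is a $\mathrm{Lie}$-nilpotent Leibniz algebra, then $\mathfrak{q}$ satisfies the $\mathrm{Lie}$-normalizer condition, i.e. every proper subalgebra $\mathfrak{s}$ of $\mathfrak{q}$ is properly contained in its $\mathrm{Lie}$-normalizer $N^{\mathrm{Lie}}_{\mathfrak{q}}(\mathfrak{s})$.
   Context: Fix a field $\mathbb{K}$ with $\frac12\in\mathbb{K}$. A Leibniz algebra is a $\mathbb{K}$-vector space with a bilinear bracket satisfying $[x,[y,z]]=[[x,y],z]-[[x,z],y]$. For two-sided ideals $\mathfrak{m},\mathfrak{n}$ of $\mathfrak{q}$, $[\mathfrak{m},\mathfrak{n}]_{\mathrm{Lie}}$ is the subspace spanned by all $[m,n]+[n,m]$, $m\in\mathfrak{m}$, $n\in\mathfrak{n}$. The lower $\mathrm{Lie}$-central series is $\mathfrak{q}^{[1]}=\mathfrak{q}$, $\mathfrak{q}^{[i]}=[\mathfrak{q}^{[i-1]},\mathfrak{q}]_{\mathrm{Lie}}$; $\mathfrak{q}$ is $\mathrm{Lie}$-nilpotent if $\mathfrak{q}^{[k]}=0$ for some $k$. For a subset $\mathfrak{m}\subseteq\mathfrak{q}$, the $\mathrm{Lie}$-normalizer is $N^{\mathrm{Lie}}_{\mathfrak{q}}(\mathfrak{m})=\{q\in\mathfrak{q}: [q,m]+[m,q]\in\mathfrak{m}\text{ for all } m\in\mathfrak{m}\}$. *)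

theory Defs
  imports Complex_Main
begin

text \<open>A Leibniz algebra over a field 'k: the carrier is the whole type 'v, a
  'k-vector space via scale, with a bilinear bracket satisfying the (left)
  Leibniz identity [x,[y,z]] = [[x,y],z] - [[x,z],y].\<close>

definition leibniz_algebra ::
  "('k::field \<Rightarrow> 'v::ab_group_add \<Rightarrow> 'v) \<Rightarrow> ('v \<Rightarrow> 'v \<Rightarrow> 'v) \<Rightarrow> bool" where
  "leibniz_algebra scale br \<longleftrightarrow>
     Vector_Spaces.vector_space scale \<and>
     (\<forall>x. Vector_Spaces.linear scale scale (br x)) \<and>
     (\<forall>y. Vector_Spaces.linear scale scale (\<lambda>x. br x y)) \<and>
     (\<forall>x y z. br x (br y z) = br (br x y) z - br (br x z) y)"

definition lie_bracket_sets ::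
  "('k::field \<Rightarrow> 'v::ab_group_add \<Rightarrow> 'v) \<Rightarrow> ('v \<Rightarrow> 'v \<Rightarrow> 'v) \<Rightarrow> 'v set \<Rightarrow> 'v set \<Rightarrow> 'v set" where
  "lie_bracket_sets scale br M N =
     module.span scale {br m n + br n m | m n. m \<in> M \<and> n \<in> N}"

text \<open>Lower Lie-central series: lower_lie_central scale br (Suc 0) = q,
  q^[i] = [q^[i-1], q]_Lie. Index 0 is set equal to the whole algebra as well.\<close>
fun lower_lie_central ::
  "('k::field \<Rightarrow> 'v::ab_group_add \<Rightarrow> 'v) \<Rightarrow> ('v \<Rightarrow> 'v \<Rightarrow> 'v) \<Rightarrow> nat \<Rightarrow> 'v set" where
  "lower_lie_central scale br 0 = UNIV"
| "lower_lie_central scale br (Suc 0) = UNIV"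
| "lower_lie_central scale br (Suc (Suc i)) =
     lie_bracket_sets scale br (lower_lie_central scale br (Suc i)) UNIV"

definition lie_nilpotent ::
  "('k::field \<Rightarrow> 'v::ab_group_add \<Rightarrow> 'v) \<Rightarrow> ('v \<Rightarrow> 'v \<Rightarrow> 'v) \<Rightarrow> bool" where
  "lie_nilpotent scale br \<longleftrightarrow> (\<exists>k. lower_lie_central scale br k = {0})"

definition subalgebra ::
  "('k::field \<Rightarrow> 'v::ab_group_add \<Rightarrow> 'v) \<Rightarrow> ('v \<Rightarrow> 'v \<Rightarrow> 'v) \<Rightarrow> 'v set \<Rightarrow> bool" where
  "subalgebra scale br S \<longleftrightarrow>
     module.subspace scale S \<and> (\<forall>x\<in>S. \<forall>y\<in>S. br x y \<in> S)"

definition lie_normalizer ::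
  "('v::ab_group_add \<Rightarrow> 'v \<Rightarrow> 'v) \<Rightarrow> 'v set \<Rightarrow> 'v set" where
  "lie_normalizer br M = {q. \<forall>m\<in>M. br q m + br m q \<in> M}"

end

theory Submission
  imports Defs
begin

theorem mainTheorem2:
  fixes scale :: "'k::field \<Rightarrow> 'v::ab_group_add \<Rightarrow> 'v"
    and br :: "'v \<Rightarrow> 'v \<Rightarrow> 'v"
  assumes "(2::'k) \<noteq> 0"
    and "leibniz_algebra scale br"
    and "lie_nilpotent scale br"
    and "subalgebra scale br S"
    and "S \<noteq> UNIV"
  shows "S \<subset> lie_normalizer br S"
proof -
  have M: "module scale"
    using assms(2) unfolding leibniz_algebra_def module_iff_vector_space by blast
  have sub: "module.subspace scale S" and cl: "\<And>x y. x \<in> S \<Longrightarrow> y \<in> S \<Longrightarrow> br x y \<in> S"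
    using assms(4) unfolding subalgebra_def by auto
  have incl: "S \<subseteq> lie_normalizer br S"
    unfolding lie_normalizer_def using module.subspace_add[OF M sub] cl by blast
  obtain k0 where k0: "lower_lie_central scale br k0 = {0}"
    using assms(3) unfolding lie_nilpotent_def by blast
  define P where "P k \<longleftrightarrow> lower_lie_central scale br k \<subseteq> S" for k
  have "P k0" unfolding P_def k0 using module.subspace_0[OF M sub] by simp
  define k where "k = (LEAST k. P k)"
  have Pk: "P k" unfolding k_def by (rule LeastI) fact
  have k0': "k \<noteq> 0" using Pk assms(5) unfolding P_def by auto
  have k1: "k \<noteq> Suc 0" using Pk assms(5) unfolding P_def by auto
  obtain i where ki: "k = Suc (Suc i)" using k0' k1
    by (metis not0_implies_Suc)
  have "\<not> P (Suc i)"
  proof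
    assume "P (Suc i)"
    then have "k \<le> Suc i" unfolding k_def by (rule Least_le)
    then show False using ki by simp
  qed
  then obtain x where x: "x \<in> lower_lie_central scale br (Suc i)" "x \<notin> S"
    unfolding P_def by blast
  have "x \<in> lie_normalizer br S"
    unfolding lie_normalizer_def
  proof (intro CollectI ballI)
    fix m assume "m \<in> S"
    have "br x m + br m x \<in> lower_lie_central scale br k"
      unfolding ki lower_lie_central.simps lie_bracket_sets_def
      by (rule module.span_base[OF M]) (use x in blast)
    then show "br x m + br m x \<in> S" using Pk unfolding P_def by blast
  qed
  with x incl show ?thesis by blast
qed

end
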